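(* Let $p\ge2$, $A\in\mathcal{B}_I(p)$ with common between-group parameter $c$, let $\alpha_k=\frac1{n_k}+\frac{n_k-1}{n_k}b_k$ and $\alpha^\star=\min_{1\le k\le p}\alpha_k$. If $0<\alpha_k<1$ for all $k\in\{1,\dots,p\}$ and $-\frac{\alpha^\star}{p-1}<c<\alpha^\star$, then $A\succ 0$.
   Context: All matrices are real; $\succ 0$ means positive definite. $J_m$ is the $m\times m$ matrix of ones, $J_{m,q}=\mathbf 1_m\mathbf 1_q^\top$. For $n_1,\dots,n_p\ge1$, $n=\sum n_k$, $\mathcal{B}_I(p)$ is the set of symmetric $n\times n$ block matrices $A=(A_{k,\ell})$ (block $A_{k,\ell}$ of size $n_k\times n_\ell$) with diagonal blocks $A_{k,k}=(1-b_k)I_{n_k}+b_kJ_{n_k}$ and off-diagonal blocks $A_{k,\ell}=cJ_{n_k,n_\ell}$ ($k\ne\ell$), where $b_k,c\in]-1,1[$ and $b_k=0$ if $n_k=1$. *)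

theory Defs
  imports Complex_Main
begin

text \<open>Group sizes n_0,...,n_{p-1} are given by a function n :: nat => nat (groups indexed 0..p-1).
 An n x n real matrix is a function nat => nat => real on indices below N = sum of the n_k.\<close>

definition offs :: "(nat \<Rightarrow> nat) \<Rightarrow> nat \<Rightarrow> nat" where
  "offs n k = (\<Sum>l<k. n l)"

definition in_block :: "(nat \<Rightarrow> nat) \<Rightarrow> nat \<Rightarrow> nat \<Rightarrow> bool" where
  "in_block n k r \<longleftrightarrow> offs n k \<le> r \<and> r < offs n (Suc k)"

definition in_BI :: "nat \<Rightarrow> (nat \<Rightarrow> nat) \<Rightarrow> (nat \<Rightarrow> real) \<Rightarrow> real
    \<Rightarrow> (nat \<Rightarrow> nat \<Rightarrow> real) \<Rightarrow> bool" where
  "in_BI p n b c A \<longleftrightarrow>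
     (\<forall>k<p. n k \<ge> 1) \<and>
     (\<forall>k<p. -1 < b k \<and> b k < 1) \<and> -1 < c \<and> c < 1 \<and>
     (\<forall>k<p. n k = 1 \<longrightarrow> b k = 0) \<and>
     (\<forall>k<p. \<forall>l<p. \<forall>r s. in_block n k r \<and> in_block n l s \<longrightarrow>
        A r s = (if k = l then (1 - b k) * (if r = s then 1 else 0) + b k else c))"

definition pos_def :: "nat \<Rightarrow> (nat \<Rightarrow> nat \<Rightarrow> real) \<Rightarrow> bool" where
  "pos_def N A \<longleftrightarrow> (\<forall>i<N. \<forall>j<N. A i j = A j i) \<and>
     (\<forall>x :: nat \<Rightarrow> real. (\<exists>i<N. x i \<noteq> 0) \<longrightarrow> (\<Sum>i<N. \<Sum>j<N. x i * A i j * x j) > 0)"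

definition alpha :: "(nat \<Rightarrow> nat) \<Rightarrow> (nat \<Rightarrow> real) \<Rightarrow> nat \<Rightarrow> real" where
  "alpha n b k = 1 / real (n k) + (real (n k) - 1) / real (n k) * b k"

end

theory Submission
  imports Defs
begin

lemma var_id:
  fixes f :: "'a \<Rightarrow> real"
  assumes "finite I" "I \<noteq> {}"
  shows "(\<Sum>i\<in>I. (f i - sum f I / card I)^2) = (\<Sum>i\<in>I. (f i)^2) - (sum f I)^2 / card I"
proof -
  have c: "real (card I) > 0" using assms by (simp add: card_gt_0_iff)
  have "(\<Sum>i\<in>I. (f i - sum f I / card I)^2) = (\<Sum>i\<in>I. (f i)^2 + (sum f I / card I)^2 - 2 * (sum f I / card I) * f i)"
    by (intro sum.cong refl) (simp add: power2_diff algebra_simps)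
  also have "\<dots> = (\<Sum>i\<in>I. (f i)^2) + card I * (sum f I / card I)^2 - 2 * (sum f I / card I) * sum f I"
    by (simp add: sum.distrib sum_subtractf sum_distrib_left)
  also have "\<dots> = (\<Sum>i\<in>I. (f i)^2) - (sum f I)^2 / card I"
    using c by (simp add: field_simps power2_eq_square)
  finally show ?thesis .
qed

lemma cs:
  fixes f :: "'a \<Rightarrow> real"
  assumes "finite I"
  shows "(sum f I)^2 \<le> card I * (\<Sum>i\<in>I. (f i)^2)"
proof (cases "I = {}")
  case True then show ?thesis by simp
next
  case False
  have c: "real (card I) > 0" using assms False by (simp add: card_gt_0_iff)
  have "0 \<le> (\<Sum>i\<in>I. (f i - sum f I / card I)^2)" by (intro sum_nonneg) simp
  then have "(sum f I)^2 / card I \<le> (\<Sum>i\<in>I. (f i)^2)" using var_id[OF assms False, of f] by simp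
  then show ?thesis using c by (simp add: field_simps)
qed

lemma block_sum:
  "(\<Sum>i<offs n p. f i) = (\<Sum>k<p. \<Sum>i\<in>{offs n k..<offs n (Suc k)}. f i)"
proof (induction p)
  case 0 then show ?case by (simp add: offs_def)
next
  case (Suc p)
  have "offs n p \<le> offs n (Suc p)" by (simp add: offs_def)
  then have "(\<Sum>i<offs n (Suc p). f i) = (\<Sum>i<offs n p. f i) + (\<Sum>i\<in>{offs n p..<offs n (Suc p)}. f i)"
    by (metis atLeast0LessThan sum.atLeastLessThan_concat zero_le)
  then show ?case using Suc.IH by simp
qed

lemma block_exists:
  "i < offs n p \<Longrightarrow> \<exists>k<p. offs n k \<le> i \<and> i < offs n (Suc k)"
proof (induction p)
  case 0 then show ?case by (simp add: offs_def)
next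
  case (Suc p)
  show ?case
  proof (cases "i < offs n p")
    case True then show ?thesis using Suc.IH by (meson less_SucI)
  next
    case False then show ?thesis using Suc.prems by (meson lessI not_less)
  qed
qed

lemma card_block: "card {offs n k..<offs n (Suc k)} = n k"
  by (simp add: offs_def)


theorem corollary2:
  fixes p :: nat and n :: "nat \<Rightarrow> nat" and b :: "nat \<Rightarrow> real" and c :: real
    and A :: "nat \<Rightarrow> nat \<Rightarrow> real"
  assumes "p \<ge> 2"
    and "in_BI p n b c A"
    and "\<forall>k<p. 0 < alpha n b k \<and> alpha n b k < 1"
    and "- (Min ((alpha n b) ` {..<p})) / (real p - 1) < c"
    and "c < Min ((alpha n b) ` {..<p})"
  shows "pos_def (\<Sum>k<p. n k) A"
proof -
  define N where "N = offs n p"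
  have NN: "(\<Sum>k<p. n k) = N" by (simp add: N_def offs_def)
  define B where "B k = {offs n k..<offs n (Suc k)}" for k
  have nk: "\<And>k. k < p \<Longrightarrow> n k \<ge> 1" and bk: "\<And>k. k < p \<Longrightarrow> b k < 1"
    using assms(2) by (auto simp: in_BI_def)
  have hA: "\<And>k l i j. k < p \<Longrightarrow> l < p \<Longrightarrow> i \<in> B k \<Longrightarrow> j \<in> B l \<Longrightarrow>
     A i j = (if k = l then (1 - b k) * (if i = j then 1 else 0) + b k else c)"
    using assms(2) unfolding in_BI_def in_block_def B_def by auto
  define am where "am = Min ((alpha n b) ` {..<p})"
  have amle: "\<And>k. k < p \<Longrightarrow> am \<le> alpha n b k" unfolding am_def by (intro Min_le) auto
  have bex: "\<And>i. i < N \<Longrightarrow> \<exists>k<p. i \<in> B k"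
    using block_exists unfolding N_def B_def by fastforce
  have sym: "\<forall>i<N. \<forall>j<N. A i j = A j i"
  proof (intro allI impI)
    fix i j assume "i < N" "j < N"
    then obtain k l where "k < p" "i \<in> B k" "l < p" "j \<in> B l" using bex by blast
    then show "A i j = A j i" using hA by auto
  qed
  have posq: "(\<Sum>i<N. \<Sum>j<N. x i * A i j * x j) > 0" if xn: "\<exists>i<N. x i \<noteq> 0" for x
  proof -
    define S where "S k = (\<Sum>i\<in>B k. x i)" for k
    define Q where "Q k = (\<Sum>i\<in>B k. (x i)^2)" for k
    define R where "R k = (\<Sum>i\<in>B k. (x i - S k / card (B k))^2)" for k
    define P where "P k = (1 - b k) * Q k + b k * (S k)^2" for k
    define T where "T = (\<Sum>k<p. S k)"
    have cardB: "card (B k) = n k" for k unfolding B_def by (rule card_block)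
    have F: "(\<Sum>i\<in>B k. \<Sum>j\<in>B l. x i * A i j * x j) = (if k = l then P k else c * S k * S l)"
      if "k < p" "l < p" for k l
    proof (cases "k = l")
      case False
      have "(\<Sum>i\<in>B k. \<Sum>j\<in>B l. x i * A i j * x j) = (\<Sum>i\<in>B k. \<Sum>j\<in>B l. c * (x i * x j))"
        using that False by (intro sum.cong refl) (simp add: hA)
      also have "\<dots> = c * (\<Sum>i\<in>B k. \<Sum>j\<in>B l. x i * x j)"
        by (simp add: sum_distrib_left)
      also have "\<dots> = c * S k * S l"
        unfolding S_def by (simp add: mult.assoc sum_product)
      finally show ?thesis using False by simp
    next
      case True
      have "(\<Sum>i\<in>B k. \<Sum>j\<in>B l. x i * A i j * x j) = (\<Sum>i\<in>B k. (1 - b k) * (x i)^2 + b k * (x i * S k))"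
      proof (intro sum.cong refl)
        fix i assume i: "i \<in> B k"
        have "(\<Sum>j\<in>B l. x i * A i j * x j) = (\<Sum>j\<in>B k. (1 - b k) * (if i = j then x i * x j else 0) + b k * (x i * x j))"
          using that True i by (intro sum.cong refl) (auto simp: hA algebra_simps)
        also have "\<dots> = (1 - b k) * (x i)^2 + b k * (x i * S k)"
          using i by (simp add: sum.distrib sum_distrib_left[symmetric] S_def power2_eq_square B_def)
        finally show "(\<Sum>j\<in>B l. x i * A i j * x j) = (1 - b k) * (x i)^2 + b k * (x i * S k)" .
      qed
      also have "\<dots> = P k"
      proof -
        have e: "(\<Sum>i\<in>B k. x i * S k) = (S k)^2" by (simp add: S_def[of k] sum_distrib_right[symmetric] power2_eq_square)
        show ?thesis by (simp add: P_def Q_def sum.distrib sum_distrib_left[symmetric] e)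
      qed
      finally show ?thesis using True by simp
    qed
    have "(\<Sum>i<N. \<Sum>j<N. x i * A i j * x j) = (\<Sum>k<p. \<Sum>i\<in>B k. \<Sum>l<p. \<Sum>j\<in>B l. x i * A i j * x j)"
      unfolding N_def B_def by (simp add: block_sum)
    also have "\<dots> = (\<Sum>k<p. \<Sum>l<p. \<Sum>i\<in>B k. \<Sum>j\<in>B l. x i * A i j * x j)"
      by (rule sum.cong[OF refl]) (rule sum.swap)
    also have "\<dots> = (\<Sum>k<p. \<Sum>l<p. c * S k * S l + (if k = l then P k - c * (S k)^2 else 0))"
      by (intro sum.cong refl) (simp add: F power2_eq_square)
    also have "\<dots> = c * T^2 + (\<Sum>k<p. P k - c * (S k)^2)"
    proof -
      have "(\<Sum>k<p. \<Sum>l<p. c * S k * S l) = (\<Sum>k<p. c * S k * T)"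
        by (simp add: T_def sum_distrib_left)
      also have "\<dots> = c * (T * T)"
        by (simp add: sum_distrib_right[symmetric] sum_distrib_left[symmetric] T_def mult.assoc)
      finally have "(\<Sum>k<p. \<Sum>l<p. c * S k * S l) = c * (T * T)" .
      then show ?thesis by (simp add: sum.distrib power2_eq_square)
    qed
    finally have tot: "(\<Sum>i<N. \<Sum>j<N. x i * A i j * x j) = c * T^2 + (\<Sum>k<p. P k - c * (S k)^2)" .
    have RQ: "R k = Q k - (S k)^2 / n k" if "k < p" for k
    proof -
      have "B k \<noteq> {}" using nk[OF that] cardB[of k] by auto
      moreover have "finite (B k)" by (simp add: B_def)
      ultimately show ?thesis using var_id[of "B k" x] by (simp add: R_def Q_def S_def cardB)
    qed
    have PE: "P k - c * (S k)^2 = (1 - b k) * R k + (alpha n b k - c) * (S k)^2" if "k < p" for k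
    proof -
      have "real (n k) > 0" using nk[OF that] by simp
      then show ?thesis unfolding RQ[OF that] P_def alpha_def by (simp add: field_simps)
    qed
    have Rnn: "R k \<ge> 0" for k unfolding R_def by (intro sum_nonneg) simp
    have p1: "real p - 1 > 0" using assms(1) by simp
    obtain d where d: "d > 0" "c * T^2 + (\<Sum>k<p. (alpha n b k - c) * (S k)^2) \<ge> d * (\<Sum>k<p. (S k)^2)"
    proof (cases "c \<ge> 0")
      case True
      have "(am - c) * (\<Sum>k<p. (S k)^2) \<le> (\<Sum>k<p. (alpha n b k - c) * (S k)^2)"
        unfolding sum_distrib_left by (intro sum_mono mult_right_mono) (auto simp: amle)
      moreover have "c * T^2 \<ge> 0" using True by simp
      ultimately show ?thesis using that[of "am - c"] assms(5) am_def by linarith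
    next
      case False
      have "T^2 \<le> p * (\<Sum>k<p. (S k)^2)" using cs[of "{..<p}" S] by (simp add: T_def)
      then have "c * T^2 \<ge> c * (p * (\<Sum>k<p. (S k)^2))" using False
        by (intro mult_left_mono_neg) auto
      moreover have "(am - c) * (\<Sum>k<p. (S k)^2) \<le> (\<Sum>k<p. (alpha n b k - c) * (S k)^2)"
        unfolding sum_distrib_left by (intro sum_mono mult_right_mono) (auto simp: amle)
      moreover have "am + c * (real p - 1) > 0"
        using assms(4) p1 unfolding am_def[symmetric] by (simp add: field_simps)
      ultimately show ?thesis using that[of "am + c * (real p - 1)"] by (simp add: algebra_simps)
    qed
    have tot2: "(\<Sum>i<N. \<Sum>j<N. x i * A i j * x j) = (\<Sum>k<p. (1 - b k) * R k) + (c * T^2 + (\<Sum>k<p. (alpha n b k - c) * (S k)^2))"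
      unfolding tot by (simp add: PE sum.distrib)
    obtain i where i: "i < N" "x i \<noteq> 0" using xn by blast
    then obtain k where k: "k < p" "i \<in> B k" using bex by blast
    have s1: "(\<Sum>k<p. (1 - b k) * R k) \<ge> (1 - b k) * R k"
      using k(1) by (intro member_le_sum) (auto simp: Rnn bk less_imp_le)
    have s2: "(\<Sum>k<p. (S k)^2) \<ge> (S k)^2"
      using k(1) by (intro member_le_sum) auto
    have r0: "(1 - b k) * R k \<ge> 0" using Rnn bk[OF k(1)] by simp
    show ?thesis
    proof (cases "R k = 0")
      case False
      then have "(1 - b k) * R k > 0" using Rnn[of k] bk[OF k(1)] by simp
      moreover have "d * (\<Sum>k<p. (S k)^2) \<ge> 0" using d(1) by (intro mult_nonneg_nonneg sum_nonneg) auto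
      ultimately show ?thesis unfolding tot2 using s1 d(2) by linarith
    next
      case True
      have "\<forall>j\<in>B k. (x j - S k / card (B k))^2 = 0"
        using True unfolding R_def by (subst sum_nonneg_eq_0_iff[symmetric]) (auto simp: B_def)
      then have "x i = S k / card (B k)" using k(2) by simp
      then have "S k \<noteq> 0" using i(2) by auto
      then have "d * (S k)^2 > 0" using d(1) by simp
      then have "d * (\<Sum>k<p. (S k)^2) > 0" using s2 d(1)
        by (smt (verit) mult_left_mono)
      then show ?thesis unfolding tot2 using s1 r0 d(2) by linarith
    qed
  qed
  show ?thesis unfolding NN pos_def_def using sym posq by blast
qed

end
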